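(* For all $n\ge1$, $p_{0,n}<\phi$, where $\phi=(1+\sqrt5)/2$.
   Context: $\Phi$ is the partial map of $\mathbb{R}^2$ defined for $p\ne0$ by $\Phi(p,u)=\bigl(p^2(u+1)-1,\ 1/p\bigr)$. For $n\ge1$, the trajectory $T_n$ is the (existing and unique) finite sequence $(p_{j,n},u_{j,n})$, $j=0,\dots,n$, with $(p_{j,n},u_{j,n})=\Phi(p_{j-1,n},u_{j-1,n})$ for $1\le j\le n$, $u_{0,n}=0$, $p_{n,n}=0$, and $p_{j,n}>0$ for $0\le j\le n-1$. *)

theory Defs
  imports Complex_Main
begin

definition Phi :: "real \<times> real \<Rightarrow> real \<times> real" where
  "Phi pu = (fst pu ^ 2 * (snd pu + 1) - 1, 1 / fst pu)"

text \<open>A trajectory T_n: a finite sequence (p_j,u_j), j=0..n, given as a function on nat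
  (only indices 0..n are relevant), with u_0 = 0, p_n = 0, p_j > 0 for j < n, and
  (p_j,u_j) = Phi(p_{j-1},u_{j-1}) for 1 <= j <= n (Phi is applied only where p_{j-1} > 0).\<close>
definition is_trajectory :: "nat \<Rightarrow> (nat \<Rightarrow> real \<times> real) \<Rightarrow> bool" where
  "is_trajectory n T \<longleftrightarrow>
     snd (T 0) = 0 \<and> fst (T n) = 0 \<and>
     (\<forall>j<n. fst (T j) > 0) \<and>
     (\<forall>j. 1 \<le> j \<and> j \<le> n \<longrightarrow> T j = Phi (T (j - 1)))"

text \<open>The trajectory T_n (restricted to indices 0..n), assumed in the paper to exist uniquely.\<close>
definition traj :: "nat \<Rightarrow> nat \<Rightarrow> real \<times> real" where
  "traj n = (THE T. is_trajectory n T \<and> (\<forall>j>n. T j = (0, 0)))"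

definition p_traj :: "nat \<Rightarrow> nat \<Rightarrow> real" where
  "p_traj j n = fst (traj n j)"

definition golden :: real where
  "golden = (1 + sqrt 5) / 2"

end

theory Submission
  imports Defs
begin

definition F :: "real \<Rightarrow> nat \<Rightarrow> real \<times> real" where
  "F x j = (Phi ^^ j) (x, 0)"

definition pf where "pf x j = fst (F x j)"
definition uf where "uf x j = snd (F x j)"

lemma F_Suc: "F x (Suc j) = Phi (F x j)"
  by (simp add: F_def)

lemma pf0[simp]: "pf x 0 = x" and uf0[simp]: "uf x 0 = 0"
  by (simp_all add: pf_def uf_def F_def)

lemma pfS: "pf x (Suc j) = pf x j ^ 2 * (uf x j + 1) - 1"
  and ufS: "uf x (Suc j) = 1 / pf x j"
  by (simp_all add: pf_def uf_def F_Suc Phi_def)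

lemma uf_nonneg: "(\<forall>i<j. pf x i > 0) \<Longrightarrow> uf x j \<ge> 0"
  by (cases j) (auto simp: ufS)

lemma mono_pf:
  assumes "0 < x" "x < y"
  shows "(\<forall>i<j. pf x i > 0) \<Longrightarrow> pf x j < pf y j \<and>
           pf x j * (uf x j + 1) < pf y j * (uf y j + 1)"
proof (induction j)
  case 0 then show ?case using assms by simp
next
  case (Suc j)
  then have IH: "pf x j < pf y j" "pf x j * (uf x j + 1) < pf y j * (uf y j + 1)"
    and px: "pf x j > 0" by auto
  have ux: "uf x j \<ge> 0" using Suc.prems by (intro uf_nonneg) auto
  have py: "pf y j > 0" using IH px by linarith
  have sx: "pf x j * (uf x j + 1) > 0" using px ux by simp
  have m: "pf x j * (pf x j * (uf x j + 1)) < pf y j * (pf y j * (uf y j + 1))"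
    using mult_strict_mono[OF IH(1) IH(2)] py sx by auto
  have p1: "pf x (Suc j) < pf y (Suc j)"
    using m by (simp add: pfS power2_eq_square algebra_simps)
  have inv: "1 / pf y j < 1 / pf x j" using px IH by (simp add: frac_less2)
  have ex: "pf x (Suc j) * (uf x (Suc j) + 1) = pf x (Suc j) + pf x j * (uf x j + 1) - 1 / pf x j"
    using px by (simp add: pfS ufS field_simps power2_eq_square)
  have ey: "pf y (Suc j) * (uf y (Suc j) + 1) = pf y (Suc j) + pf y j * (uf y j + 1) - 1 / pf y j"
    using py by (simp add: pfS ufS field_simps power2_eq_square)
  show ?case using p1 ex ey IH inv by linarith
qed

lemma golden_sq: "golden ^ 2 = golden + 1"
  by (simp add: golden_def power2_eq_square field_simps)

lemma golden_gt1: "golden > 1"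
proof -
  have "sqrt 5 > 1" by simp
  then show ?thesis by (simp add: golden_def)
qed

lemma golden_le2: "golden \<le> 2"
proof -
  have "sqrt 5 \<le> sqrt (3^2)" by (intro real_sqrt_le_mono) simp
  then have "sqrt 5 \<le> 3" by simp
  then show ?thesis by (simp add: golden_def)
qed

lemma big: "x \<ge> golden \<Longrightarrow> pf x j \<ge> golden \<and> uf x j \<ge> 0"
proof (induction j)
  case 0 then show ?case by simp
next
  case (Suc j)
  then have p: "pf x j \<ge> golden" and u: "uf x j \<ge> 0" by auto
  have g1: "golden > 1" by (rule golden_gt1)
  have "pf x j ^ 2 * (uf x j + 1) \<ge> pf x j ^ 2 * 1"
    using u by (intro mult_left_mono) auto
  moreover have "pf x j ^ 2 - 1 \<ge> pf x j"
  proof -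
    have "(pf x j - golden) * (pf x j + golden - 1) \<ge> 0" using p g1 by simp
    then show ?thesis using golden_sq by (simp add: algebra_simps power2_eq_square)
  qed
  ultimately have "pf x (Suc j) \<ge> golden" using p by (simp add: pfS)
  moreover have "uf x (Suc j) \<ge> 0" using p g1 by (simp add: ufS)
  ultimately show ?case by simp
qed

lemma cont: "(\<forall>x\<in>S. \<forall>i<j. pf x i \<noteq> 0) \<Longrightarrow>
   continuous_on S (\<lambda>x. pf x j) \<and> continuous_on S (\<lambda>x. uf x j)"
proof (induction j)
  case 0 then show ?case by (simp add: continuous_on_id continuous_on_const)
next
  case (Suc j)
  then have c: "continuous_on S (\<lambda>x. pf x j)" "continuous_on S (\<lambda>x. uf x j)" by auto
  have nz: "\<forall>x\<in>S. pf x j \<noteq> 0" using Suc.prems by auto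
  show ?case unfolding pfS ufS
    using c nz by (auto intro!: continuous_intros)
qed

lemma exist: "n \<ge> 1 \<Longrightarrow> \<exists>x>0. (\<forall>i<n. pf x i > 0) \<and> pf x n = 0"
proof (induction n rule: dec_induct)
  case base
  show ?case by (rule exI[of _ 1]) (simp add: pfS)
next
  case (step n)
  then obtain r where r: "r > 0" "\<forall>i<n. pf r i > 0" "pf r n = 0" by auto
  have pos: "\<forall>i<n. pf x i > 0" if "x \<ge> r" for x
  proof (intro allI impI)
    fix i assume "i < n"
    show "pf x i > 0"
    proof (cases "x = r")
      case True then show ?thesis using r \<open>i<n\<close> by auto
    next
      case False
      then have "pf r i < pf x i" using mono_pf[of r x i] r that \<open>i<n\<close> by auto
      then show ?thesis using r \<open>i<n\<close> by auto
    qed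
  qed
  define g where "g x = pf x (Suc n)" for x
  have gr: "g r = -1" using r by (simp add: g_def pfS)
  have g2: "g 2 \<ge> golden" using big[of 2 "Suc n"] golden_le2 by (simp add: g_def)
  have r2: "r \<le> 2"
  proof (rule ccontr)
    assume "\<not> r \<le> 2"
    then have "pf r n \<ge> golden" using big[of r n] golden_le2 by auto
    then show False using r golden_gt1 by simp
  qed
  have cg: "continuous_on {r..2} g"
  proof -
    have "\<forall>x\<in>{r..2}. \<forall>i<n. pf x i \<noteq> 0" using pos by fastforce
    from cont[OF this] show ?thesis unfolding g_def pfS
      by (auto intro!: continuous_intros)
  qed
  have "g r \<le> 0" "0 \<le> g 2" using gr g2 golden_gt1 by auto
  from IVT'[of g r 0 2, OF this r2 cg] obtain c where c: "r \<le> c" "c \<le> 2" "g c = 0" by auto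
  have crr: "c \<noteq> r" using c gr by auto
  then have cr: "r < c" using c by auto
  have "\<forall>i<Suc n. pf c i > 0"
  proof (intro allI impI)
    fix i assume "i < Suc n"
    then have "pf r i < pf c i" using mono_pf[of r c i] r cr by auto
    moreover have "pf r i \<ge> 0" using r(2,3) \<open>i < Suc n\<close> by (auto simp: less_Suc_eq intro: less_imp_le)
    ultimately show "pf c i > 0" by linarith
  qed
  moreover have "pf c (Suc n) = 0" using c(3) by (simp add: g_def)
  moreover have "c > 0" using cr r(1) by linarith
  ultimately show ?case by blast
qed

lemma traj_eq:
  assumes "is_trajectory n T"
  shows "j \<le> n \<Longrightarrow> T j = F (fst (T 0)) j"
proof (induction j)
  case 0
  have "snd (T 0) = 0" using assms by (simp add: is_trajectory_def)
  then show ?case by (simp add: F_def prod_eq_iff)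
next
  case (Suc j)
  then have "T (Suc j) = Phi (T j)" using assms unfolding is_trajectory_def
    by (metis diff_Suc_1 le_add1 plus_1_eq_Suc)
  then show ?case using Suc by (simp add: F_Suc)
qed

lemma ex1_traj:
  assumes "n \<ge> 1"
  shows "\<exists>!T. is_trajectory n T \<and> (\<forall>j>n. T j = (0, 0))"
proof -
  obtain x where x: "x > 0" "\<forall>i<n. pf x i > 0" "pf x n = 0" using exist[OF assms] by auto
  define T where "T j = (if j \<le> n then F x j else (0,0))" for j
  have tT: "is_trajectory n T"
    unfolding is_trajectory_def
  proof (intro conjI allI impI)
    show "snd (T 0) = 0" by (simp add: T_def F_def)
    show "fst (T n) = 0" using x by (simp add: T_def pf_def)
    fix j
    show "j < n \<Longrightarrow> fst (T j) > 0" using x by (simp add: T_def pf_def)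
    assume "1 \<le> j \<and> j \<le> n"
    then obtain k where "j = Suc k" "Suc k \<le> n" by (cases j) auto
    then show "T j = Phi (T (j - 1))" by (simp add: T_def F_Suc)
  qed
  have zT: "\<forall>j>n. T j = (0,0)" by (simp add: T_def)
  have uq: "T' = T" if t: "is_trajectory n T'" "\<forall>j>n. T' j = (0,0)" for T'
  proof -
    define y where "y = fst (T' 0)"
    have eq: "j \<le> n \<Longrightarrow> T' j = F y j" for j using traj_eq[OF t(1)] unfolding y_def by blast
    have yp: "\<forall>i<n. pf y i > 0"
    proof (intro allI impI)
      fix i assume "i < n"
      then have "fst (T' i) > 0" using t(1) by (simp add: is_trajectory_def)
      then show "pf y i > 0" using eq[of i] \<open>i<n\<close> by (simp add: pf_def)
    qed
    have yn: "pf y n = 0" using t(1) eq[of n] by (simp add: is_trajectory_def pf_def)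
    have y0: "y > 0" using yp assms by (metis pf0 less_le_trans zero_less_one)
    have "x = y"
    proof (rule ccontr)
      assume "x \<noteq> y"
      then consider "x < y" | "y < x" by linarith
      then show False
      proof cases
        case 1 then show False using mono_pf[of x y n] x yn by auto
      next
        case 2 then show False using mono_pf[of y x n] yp yn y0 x by auto
      qed
    qed
    show ?thesis
    proof
      fix j show "T' j = T j"
      proof (cases "j \<le> n")
        case True then show ?thesis using eq \<open>x = y\<close> by (simp add: T_def)
      next
        case False then show ?thesis using t(2) by (simp add: T_def)
      qed
    qed
  qed
  show ?thesis
  proof (rule ex1I[of _ T])
    show "is_trajectory n T \<and> (\<forall>j>n. T j = (0, 0))" using tT zT by (rule conjI)
    fix T' assume "is_trajectory n T' \<and> (\<forall>j>n. T' j = (0, 0))"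
    then show "T' = T" using uq by blast
  qed
qed

theorem lemma6:
  fixes n :: nat
  assumes "n \<ge> 1"
  shows "p_traj 0 n < golden"
proof -
  have t: "is_trajectory n (traj n)"
    using theI'[OF ex1_traj[OF assms]] unfolding traj_def by blast
  define x where "x = fst (traj n 0)"
  have "traj n n = F x n" using traj_eq[OF t, of n] unfolding x_def by simp
  then have "pf x n = 0" using t by (simp add: is_trajectory_def pf_def)
  then have "\<not> x \<ge> golden" using big[of x n] golden_gt1 by auto
  then show ?thesis by (simp add: p_traj_def x_def)
qed

end
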